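(* Consider an RBM with observed variables $X\in\{-1,1\}^n$ as in the context, with parameter $s$. Fix an observed variable $u$ and subsets $I,S\subseteq[n]$ such that $\{u\},I,S$ are pairwise disjoint, $I$ is nonempty, and $I$ is a subset of the MRF neighborhood of $u$. Fix any assignments $x_u\in\{-1,1\}$, $x_I\in\{-1,1\}^{|I|}$, $x_S\in\{-1,1\}^{|S|}$. Then there exists a subset $I'\subseteq I$ with $|I'|\le2^s$ such that \[\nu_{u,I'|S}(x_u,x_{I'}|x_S)\ge\frac{1}{4^{2^s}}\left(\frac{1}{|I|}\right)^{2^s(2^s+1)}\nu_{u,I|S}(x_u,x_I|x_S),\] where $x_{I'}$ is the restriction of $x_I$ to $I'$.
   Context: RBM: $\mathbb{P}(X=x,Y=y)\propto\exp(x^TJy+h^Tx+g^Ty)$ over observed $X\in\{-1,1\}^n$, latent $Y\in\{-1,1\}^m$, $J\in\mathbb{R}^{n\times m}$, $h\in\mathbb{R}^n$, $g\in\mathbb{R}^m$. The marginal of $X$ is $\propto\exp(f(x))$, $f(x)=\sum_j\rho(J_j\cdot x+g_j)+h^Tx$, $\rho(t)=\log(e^t+e^{-t})$, $J_j$ the $j$-th column; $f=\sum_{T\subseteq[n]}\hat f(T)\chi_T$, $\chi_T(x)=\prod_{i\in T}x_i$. MRF neighborhood of $u$: all $i\ne u$ with $\hat f(T)\ne0$ for some $T\ni u,i$. $s$: maximum over $u$ of the number of latent $j$ with $J_{i,j}\ne0$ for some $i$ in the MRF neighborhood of $u$. For disjoint $\{u\},I,S$: $\nu_{u,I|S}(x_u,x_I|x_S):=|\mathbb{P}(X_u=x_u,X_I=x_I|X_S=x_S)-\mathbb{P}(X_u=x_u|X_S=x_S)\mathbb{P}(X_I=x_I|X_S=x_S)|$,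 probabilities under the marginal of the RBM. *)

theory Defs
  imports Complex_Main
begin

text \<open>Observed indices are 0..n-1, latent indices 0..m-1. A configuration of the
observed variables is a function x :: nat => real with x i in {-1,1} for i < n
and x i = 0 for i >= n (so the cube is finite).\<close>

definition cube :: "nat \<Rightarrow> (nat \<Rightarrow> real) set" where
  "cube n = {x. (\<forall>i<n. x i = 1 \<or> x i = -1) \<and> (\<forall>i\<ge>n. x i = 0)}"

definition rho :: "real \<Rightarrow> real" where
  "rho t = ln (exp t + exp (- t))"

definition rbm_f :: "nat \<Rightarrow> nat \<Rightarrow> (nat \<Rightarrow> nat \<Rightarrow> real) \<Rightarrow> (nat \<Rightarrow> real) \<Rightarrow> (nat \<Rightarrow> real)
    \<Rightarrow> (nat \<Rightarrow> real) \<Rightarrow> real" where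
  "rbm_f n m J h g x = (\<Sum>j<m. rho ((\<Sum>i<n. J i j * x i) + g j)) + (\<Sum>i<n. h i * x i)"

definition chi :: "nat set \<Rightarrow> (nat \<Rightarrow> real) \<Rightarrow> real" where
  "chi T x = (\<Prod>i\<in>T. x i)"

definition fourier_coeff :: "nat \<Rightarrow> ((nat \<Rightarrow> real) \<Rightarrow> real) \<Rightarrow> nat set \<Rightarrow> real" where
  "fourier_coeff n F T = (\<Sum>x\<in>cube n. F x * chi T x) / 2 ^ n"

definition mrf_nbhd :: "nat \<Rightarrow> nat \<Rightarrow> (nat \<Rightarrow> nat \<Rightarrow> real) \<Rightarrow> (nat \<Rightarrow> real) \<Rightarrow> (nat \<Rightarrow> real)
    \<Rightarrow> nat \<Rightarrow> nat set" where
  "mrf_nbhd n m J h g u = {i. i < n \<and> i \<noteq> u \<and>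
     (\<exists>T. T \<subseteq> {..<n} \<and> u \<in> T \<and> i \<in> T \<and> fourier_coeff n (rbm_f n m J h g) T \<noteq> 0)}"

definition rbm_s :: "nat \<Rightarrow> nat \<Rightarrow> (nat \<Rightarrow> nat \<Rightarrow> real) \<Rightarrow> (nat \<Rightarrow> real) \<Rightarrow> (nat \<Rightarrow> real) \<Rightarrow> nat" where
  "rbm_s n m J h g = Max ((\<lambda>u. card {j. j < m \<and> (\<exists>i\<in>mrf_nbhd n m J h g u. J i j \<noteq> 0)}) ` {..<n})"

definition rbm_prob :: "nat \<Rightarrow> nat \<Rightarrow> (nat \<Rightarrow> nat \<Rightarrow> real) \<Rightarrow> (nat \<Rightarrow> real) \<Rightarrow> (nat \<Rightarrow> real)
    \<Rightarrow> nat set \<Rightarrow> (nat \<Rightarrow> real) \<Rightarrow> real" where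
  "rbm_prob n m J h g A xa =
     (\<Sum>x\<in>{x\<in>cube n. \<forall>i\<in>A. x i = xa i}. exp (rbm_f n m J h g x))
     / (\<Sum>x\<in>cube n. exp (rbm_f n m J h g x))"

definition rbm_cond :: "nat \<Rightarrow> nat \<Rightarrow> (nat \<Rightarrow> nat \<Rightarrow> real) \<Rightarrow> (nat \<Rightarrow> real) \<Rightarrow> (nat \<Rightarrow> real)
    \<Rightarrow> nat set \<Rightarrow> nat set \<Rightarrow> (nat \<Rightarrow> real) \<Rightarrow> real" where
  "rbm_cond n m J h g A S xa = rbm_prob n m J h g (A \<union> S) xa / rbm_prob n m J h g S xa"

text \<open>nu_{u,I|S}(x_u, x_I | x_S); the assignment is given by a single function xa.\<close>
definition rbm_nu :: "nat \<Rightarrow> nat \<Rightarrow> (nat \<Rightarrow> nat \<Rightarrow> real) \<Rightarrow> (nat \<Rightarrow> real) \<Rightarrow> (nat \<Rightarrow> real)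
    \<Rightarrow> nat \<Rightarrow> nat set \<Rightarrow> nat set \<Rightarrow> (nat \<Rightarrow> real) \<Rightarrow> real" where
  "rbm_nu n m J h g u I S xa =
     \<bar>rbm_cond n m J h g (insert u I) S xa
       - rbm_cond n m J h g {u} S xa * rbm_cond n m J h g I S xa\<bar>"

end

theory Submission
  imports Defs "HOL-Library.FuncSet"
begin

lemma telescope:
  fixes d :: "'a \<Rightarrow> real" and q :: "nat \<Rightarrow> 'a \<Rightarrow> real"
  assumes "finite I" "\<forall>i\<in>I. \<bar>q i y0\<bar> \<le> 1"
  shows "\<bar>\<Sum>y\<in>Y. d y * (\<Prod>i\<in>I. q i y)\<bar> \<le> (card I + 1) * \<bar>\<Sum>y\<in>Y. d y\<bar> \<or>
    (\<exists>t\<in>I. \<exists>I0 \<subseteq> I - {t}. \<bar>\<Sum>y\<in>Y. d y * (\<Prod>i\<in>I. q i y)\<bar> \<le>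
        (card I + 1) * \<bar>\<Sum>y\<in>Y. (d y * (q t y - q t y0)) * (\<Prod>i\<in>I0. q i y)\<bar>)"
  using assms
proof (induction I rule: finite_induct)
  case empty
  then show ?case by simp
next
  case (insert t I0)
  define M where "M = \<bar>\<Sum>y\<in>Y. d y * (\<Prod>i\<in>insert t I0. q i y)\<bar>"
  define E where "E = (\<Sum>y\<in>Y. (d y * (q t y - q t y0)) * (\<Prod>i\<in>I0. q i y))"
  define DI0 where "DI0 = (\<Sum>y\<in>Y. d y * (\<Prod>i\<in>I0. q i y))"
  define k where "k = card I0"
  have ci: "card (insert t I0) = k + 1" using insert k_def by simp
  have eq: "(\<Sum>y\<in>Y. d y * (\<Prod>i\<in>insert t I0. q i y)) = E + q t y0 * DI0"
    unfolding E_def DI0_def using insert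
    by (simp add: sum_distrib_left sum.distrib[symmetric] algebra_simps)
  have ct: "\<bar>q t y0\<bar> \<le> 1" using insert by simp
  have "\<bar>q t y0 * DI0\<bar> \<le> \<bar>DI0\<bar>" using ct
    by (simp add: abs_mult mult_left_le_one_le)
  hence Mle: "M \<le> \<bar>E\<bar> + \<bar>DI0\<bar>" unfolding M_def eq by linarith
  show ?case
  proof (cases "M \<le> (k + 2) * \<bar>E\<bar>")
    case True
    then have "\<exists>t'\<in>insert t I0. \<exists>I0' \<subseteq> insert t I0 - {t'}. M \<le> (card (insert t I0) + 1) *
        \<bar>\<Sum>y\<in>Y. (d y * (q t' y - q t' y0)) * (\<Prod>i\<in>I0'. q i y)\<bar>"
      using insert(2) ci unfolding E_def by (intro bexI[of _ t] exI[of _ I0]) auto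
    then show ?thesis unfolding M_def by blast
  next
    case False
    have "(k+2) * M \<le> (k+2) * (\<bar>E\<bar> + \<bar>DI0\<bar>)" using Mle by (intro mult_left_mono) auto
    then have k1: "M * (k + 1) \<le> (k + 2) * \<bar>DI0\<bar>" using False by (simp add: algebra_simps)
    have IH: "\<bar>DI0\<bar> \<le> (k + 1) * \<bar>\<Sum>y\<in>Y. d y\<bar> \<or>
      (\<exists>t'\<in>I0. \<exists>I0' \<subseteq> I0 - {t'}. \<bar>DI0\<bar> \<le> (k + 1) * \<bar>\<Sum>y\<in>Y. (d y * (q t' y - q t' y0)) * (\<Prod>i\<in>I0'. q i y)\<bar>)"
      using insert unfolding DI0_def k_def by simp
    have aux: "M \<le> (k+2) * Z" if "\<bar>DI0\<bar> \<le> (k + 1) * Z" for Z :: real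
    proof -
      have "M * (k+1) \<le> (k+2) * ((k+1) * Z)" using k1 that
        by (meson dual_order.trans mult_left_mono of_nat_0_le_iff add_nonneg_nonneg zero_le_numeral)
      then have "M * (k+1) \<le> ((k+2) * Z) * (k+1)" by (simp add: algebra_simps)
      then show ?thesis by (simp add: mult_le_cancel_right)
    qed
    from IH show ?thesis
    proof
      assume "\<bar>DI0\<bar> \<le> (k + 1) * \<bar>\<Sum>y\<in>Y. d y\<bar>"
      then have "M \<le> (k+2) * \<bar>\<Sum>y\<in>Y. d y\<bar>" by (rule aux)
      then show ?thesis using ci unfolding M_def by (simp add: add.commute)
    next
      assume "\<exists>t'\<in>I0. \<exists>I0' \<subseteq> I0 - {t'}. \<bar>DI0\<bar> \<le> (k + 1) * \<bar>\<Sum>y\<in>Y. (d y * (q t' y - q t' y0)) * (\<Prod>i\<in>I0'. q i y)\<bar>"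
      then obtain t' I0' where t': "t' \<in> I0" "I0' \<subseteq> I0 - {t'}"
        "\<bar>DI0\<bar> \<le> (k + 1) * \<bar>\<Sum>y\<in>Y. (d y * (q t' y - q t' y0)) * (\<Prod>i\<in>I0'. q i y)\<bar>" by blast
      have "M \<le> (k+2) * \<bar>\<Sum>y\<in>Y. (d y * (q t' y - q t' y0)) * (\<Prod>i\<in>I0'. q i y)\<bar>"
        using t'(3) by (rule aux)
      moreover have "I0' \<subseteq> insert t I0 - {t'}" using t' by auto
      ultimately show ?thesis using t' ci unfolding M_def
        by (intro disjI2 bexI[of _ t'] exI[of _ I0']) (auto simp: add.commute)
    qed
  qed
qed

lemma comb_aux:
  fixes N :: nat
  shows "\<forall>(Y::'a set) d q (I::nat set). finite Y \<longrightarrow> card Y \<le> K \<longrightarrow> finite I \<longrightarrow> card I \<le> N \<longrightarrow>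
     (\<forall>i\<in>I. \<forall>y\<in>Y. \<bar>q i y\<bar> \<le> (1::real)) \<longrightarrow>
     (\<exists>T\<subseteq>I. card T \<le> K \<and> \<bar>\<Sum>y\<in>Y. d y * (\<Prod>i\<in>I. q i y)\<bar>
        \<le> (2 * (real N + 1)) ^ K * \<bar>\<Sum>y\<in>Y. d y * (\<Prod>i\<in>T. q i y)\<bar>)"
proof (induction K)
  case 0
  show ?case by (intro allI impI exI[of _ "{}"]) auto
next
  case (Suc K)
  show ?case
  proof (intro allI impI)
    fix Y :: "'a set" and d q and I :: "nat set"
    assume Y: "finite Y" "card Y \<le> Suc K" and I: "finite I" "card I \<le> N"
      and q: "\<forall>i\<in>I. \<forall>y\<in>Y. \<bar>q i y\<bar> \<le> (1::real)"
    define D where "D = (\<lambda>T. \<bar>\<Sum>y\<in>Y. d y * (\<Prod>i\<in>T. q i y)\<bar>)"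
    have C: "(2 * (real N + 1)) ^ Suc K \<ge> (2 * (real N + 1)) ^ K * 2 * (real N + 1)" by simp
    have C1: "(2 * (real N + 1)) ^ K \<ge> 1" by (intro one_le_power) auto
    show "\<exists>T\<subseteq>I. card T \<le> Suc K \<and> D I \<le> (2 * (real N + 1)) ^ Suc K * D T"
    proof (cases "Y = {}")
      case True
      then show ?thesis unfolding D_def by (intro exI[of _ "{}"]) auto
    next
      case False
      then obtain y0 where y0: "y0 \<in> Y" by blast
      have tel: "D I \<le> (card I + 1) * D {} \<or>
         (\<exists>t\<in>I. \<exists>I0 \<subseteq> I - {t}. D I \<le> (card I + 1) * \<bar>\<Sum>y\<in>Y. (d y * (q t y - q t y0)) * (\<Prod>i\<in>I0. q i y)\<bar>)"
        using telescope[OF I(1), of q y0 d Y] q y0 unfolding D_def by simp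
      have cI: "real (card I + 1) \<le> real N + 1" using I by simp
      from tel show ?thesis
      proof
        assume a: "D I \<le> (card I + 1) * D {}"
        have "(card I + 1) * D {} \<le> (real N + 1) * D {}"
          using cI by (intro mult_right_mono) (auto simp: D_def)
        also have "\<dots> \<le> (2 * (real N + 1)) ^ Suc K * D {}"
        proof (intro mult_right_mono)
          have "(real N + 1) * 1 \<le> (real N + 1) * ((2 * (real N + 1)) ^ K * 2)"
          proof (rule mult_left_mono)
            show "1 \<le> (2 * (real N + 1)) ^ K * 2" using C1 by linarith
          qed auto
          then have "real N + 1 \<le> (2 * (real N + 1)) ^ K * 2 * (real N + 1)" by (simp add: algebra_simps)
          then show "real N + 1 \<le> (2 * (real N + 1)) ^ Suc K" using C by linarith
        qed (auto simp: D_def)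
        finally show ?thesis using a by (intro exI[of _ "{}"]) auto
      next
        assume "\<exists>t\<in>I. \<exists>I0 \<subseteq> I - {t}. D I \<le> (card I + 1) * \<bar>\<Sum>y\<in>Y. (d y * (q t y - q t y0)) * (\<Prod>i\<in>I0. q i y)\<bar>"
        then obtain t I0 where t: "t \<in> I" "I0 \<subseteq> I - {t}"
          and DI: "D I \<le> (card I + 1) * \<bar>\<Sum>y\<in>Y. (d y * (q t y - q t y0)) * (\<Prod>i\<in>I0. q i y)\<bar>" by blast
        define d' where "d' = (\<lambda>y. d y * (q t y - q t y0))"
        have sY: "(\<Sum>y\<in>Y. d' y * F y) = (\<Sum>y\<in>Y - {y0}. d' y * F y)" for F
          using Y(1) y0 by (subst sum.remove[of _ y0]) (auto simp: d'_def)
        have fI0: "finite I0" using t I finite_subset by blast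
        have cI0: "card I0 \<le> N" using t I card_mono[OF I(1), of I0] by force
        have cY: "card (Y - {y0}) \<le> K" using Y y0 by simp
        obtain T' where T': "T' \<subseteq> I0" "card T' \<le> K"
          "\<bar>\<Sum>y\<in>Y - {y0}. d' y * (\<Prod>i\<in>I0. q i y)\<bar>
             \<le> (2 * (real N + 1)) ^ K * \<bar>\<Sum>y\<in>Y - {y0}. d' y * (\<Prod>i\<in>T'. q i y)\<bar>"
          using Suc.IH[THEN spec[of _ "Y - {y0}"], THEN spec[of _ d'], THEN spec[of _ q], THEN spec[of _ I0]] Y(1) cY fI0 cI0 q t by blast
        have tT: "t \<notin> T'" using T' t by auto
        have fT': "finite T'" using T' fI0 finite_subset by blast
        have split: "(\<Sum>y\<in>Y. d' y * (\<Prod>i\<in>T'. q i y)) =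
            (\<Sum>y\<in>Y. d y * (\<Prod>i\<in>insert t T'. q i y)) - q t y0 * (\<Sum>y\<in>Y. d y * (\<Prod>i\<in>T'. q i y))"
          using tT fT' by (simp add: d'_def sum_distrib_left sum_subtractf[symmetric] algebra_simps)
        have "\<bar>q t y0\<bar> \<le> 1" using q t y0 by auto
        then have "\<bar>q t y0 * (\<Sum>y\<in>Y. d y * (\<Prod>i\<in>T'. q i y))\<bar> \<le> D T'"
          unfolding D_def by (simp add: abs_mult mult_left_le_one_le)
        then have sp: "\<bar>\<Sum>y\<in>Y. d' y * (\<Prod>i\<in>T'. q i y)\<bar> \<le> 2 * max (D (insert t T')) (D T')"
          unfolding split by (simp add: D_def)
        define T where "T = (if D (insert t T') \<ge> D T' then insert t T' else T')"
        have TI: "T \<subseteq> I" and cT: "card T \<le> Suc K" using T' t fT' unfolding T_def by (auto simp: card_insert_if)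
        have DT: "max (D (insert t T')) (D T') = D T" unfolding T_def by auto
        have "D I \<le> (real N + 1) * \<bar>\<Sum>y\<in>Y. d' y * (\<Prod>i\<in>I0. q i y)\<bar>"
          using DI cI unfolding d'_def by (meson abs_ge_zero dual_order.trans mult_right_mono)
        also have "\<dots> \<le> (real N + 1) * ((2 * (real N + 1)) ^ K * \<bar>\<Sum>y\<in>Y. d' y * (\<Prod>i\<in>T'. q i y)\<bar>)"
          using T'(3) unfolding sY by (intro mult_left_mono) auto
        also have "\<dots> \<le> (real N + 1) * ((2 * (real N + 1)) ^ K * (2 * D T))"
          using sp DT by (intro mult_left_mono) auto
        also have "\<dots> = (2 * (real N + 1)) ^ Suc K * D T" by (simp add: algebra_simps)
        finally show ?thesis using TI cT by blast
      qed
    qed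
  qed
qed

definition tj :: "nat \<Rightarrow> (nat \<Rightarrow> nat \<Rightarrow> real) \<Rightarrow> (nat \<Rightarrow> real) \<Rightarrow> nat \<Rightarrow> (nat \<Rightarrow> real) \<Rightarrow> real" where
  "tj n J g j x = (\<Sum>i<n. J i j * x i) + g j"
definition Aset :: "nat \<Rightarrow> (nat \<Rightarrow> nat \<Rightarrow> real) \<Rightarrow> nat set \<Rightarrow> nat set" where
  "Aset m J I = {j. j < m \<and> (\<exists>i\<in>I. J i j \<noteq> 0)}"
definition Wf where
  "Wf n m J h g I y x = exp ((\<Sum>i<n. h i * x i) + (\<Sum>j\<in>Aset m J I. y j * tj n J g j x)) *
     (\<Prod>j\<in>{..<m} - Aset m J I. exp (tj n J g j x) + exp (- tj n J g j x))"
definition cc where "cc m J h I i y = h i + (\<Sum>j\<in>Aset m J I. y j * J i j)"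
definition zer :: "nat set \<Rightarrow> (nat \<Rightarrow> real) \<Rightarrow> nat \<Rightarrow> real" where
  "zer I x = (\<lambda>i. if i \<in> I then 0 else x i)"

lemma finite_Aset: "finite (Aset m J I)" unfolding Aset_def by auto

lemma exp_f_expand:
  "exp (rbm_f n m J h g x) = (\<Sum>y\<in>PiE (Aset m J I) (\<lambda>_. {1,-1}). Wf n m J h g I y x)"
proof -
  let ?A = "Aset m J I"
  have sub: "?A \<subseteq> {..<m}" unfolding Aset_def by auto
  have "exp (rbm_f n m J h g x) = (\<Prod>j<m. exp (tj n J g j x) + exp (- tj n J g j x)) * exp (\<Sum>i<n. h i * x i)"
  proof -
    have er: "exp (rho t) = exp t + exp (- t)" for t unfolding rho_def by (simp add: add_pos_pos)
    show ?thesis unfolding rbm_f_def tj_def exp_add exp_sum[OF finite_lessThan] er by simp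
  qed
  also have "(\<Prod>j<m. exp (tj n J g j x) + exp (- tj n J g j x)) =
     (\<Prod>j\<in>?A. exp (tj n J g j x) + exp (- tj n J g j x)) * (\<Prod>j\<in>{..<m} - ?A. exp (tj n J g j x) + exp (- tj n J g j x))"
    using prod.subset_diff[OF sub] by (simp add: mult.commute)
  also have "(\<Prod>j\<in>?A. exp (tj n J g j x) + exp (- tj n J g j x)) = (\<Prod>j\<in>?A. \<Sum>v\<in>{1::real,-1}. exp (v * tj n J g j x))"
    by simp
  also have "\<dots> = (\<Sum>y\<in>PiE ?A (\<lambda>_. {1,-1}). \<Prod>j\<in>?A. exp (y j * tj n J g j x))"
    by (rule prod_sum_PiE) (auto simp: finite_Aset)
  also have "\<dots> = (\<Sum>y\<in>PiE ?A (\<lambda>_. {1,-1}). exp (\<Sum>j\<in>?A. y j * tj n J g j x))"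
    by (simp add: exp_sum finite_Aset)
  finally show ?thesis unfolding Wf_def
    by (simp add: sum_distrib_left sum_distrib_right exp_add algebra_simps)
qed

lemma split_lin:
  assumes "I \<subseteq> {..<n}"
  shows "(\<Sum>i<n. a i * x i) = (\<Sum>i\<in>I. a i * x i) + (\<Sum>i<n. a i * zer I x i)"
proof -
  have "(\<Sum>i<n. a i * x i) = (\<Sum>i<n. a i * (if i \<in> I then x i else 0)) + (\<Sum>i<n. a i * zer I x i)"
    unfolding zer_def by (simp add: sum.distrib[symmetric] algebra_simps) (rule sum.cong, auto)
  also have "(\<Sum>i<n. a i * (if i \<in> I then x i else 0)) = (\<Sum>i\<in>{..<n} \<inter> I. a i * x i)"
    by (subst sum.inter_restrict) (auto intro: sum.cong)
  also have "{..<n} \<inter> I = I" using assms by auto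
  finally show ?thesis .
qed

lemma Wf_factor:
  assumes "I \<subseteq> {..<n}"
  shows "Wf n m J h g I y x = (\<Prod>i\<in>I. exp (x i * cc m J h I i y)) * Wf n m J h g I y (zer I x)"
proof -
  let ?A = "Aset m J I"
  have fI: "finite I" using assms finite_subset by blast
  have t_out: "tj n J g j x = tj n J g j (zer I x)" if "j < m" "j \<notin> ?A" for j
  proof -
    have "(\<Sum>i\<in>I. J i j * x i) = 0" using that unfolding Aset_def by auto
    then show ?thesis unfolding tj_def using split_lin[OF assms, of "\<lambda>i. J i j" x] by simp
  qed
  have t_in: "tj n J g j x = (\<Sum>i\<in>I. J i j * x i) + tj n J g j (zer I x)" for j
    unfolding tj_def using split_lin[OF assms, of "\<lambda>i. J i j" x] by simp
  have P: "(\<Prod>j\<in>{..<m} - ?A. exp (tj n J g j x) + exp (- tj n J g j x)) =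
           (\<Prod>j\<in>{..<m} - ?A. exp (tj n J g j (zer I x)) + exp (- tj n J g j (zer I x)))"
    using t_out by (intro prod.cong) auto
  have L: "(\<Sum>i<n. h i * x i) + (\<Sum>j\<in>?A. y j * tj n J g j x) =
     (\<Sum>i\<in>I. x i * cc m J h I i y) + ((\<Sum>i<n. h i * zer I x i) + (\<Sum>j\<in>?A. y j * tj n J g j (zer I x)))"
  proof -
    have "(\<Sum>j\<in>?A. y j * tj n J g j x) = (\<Sum>j\<in>?A. y j * (\<Sum>i\<in>I. J i j * x i)) + (\<Sum>j\<in>?A. y j * tj n J g j (zer I x))"
      unfolding t_in by (simp add: sum.distrib algebra_simps)
    also have "(\<Sum>j\<in>?A. y j * (\<Sum>i\<in>I. J i j * x i)) = (\<Sum>i\<in>I. x i * (\<Sum>j\<in>?A. y j * J i j))"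
      by (simp add: sum_distrib_left sum_distrib_right algebra_simps sum.swap[of _ ?A I])
    finally show ?thesis using split_lin[OF assms, of h x] unfolding cc_def
      by (simp add: sum.distrib algebra_simps sum_distrib_left)
  qed
  show ?thesis unfolding Wf_def L P exp_add
    by (simp add: exp_sum[OF fI] mult.assoc)
qed

definition C0 :: "nat \<Rightarrow> nat set \<Rightarrow> nat set \<Rightarrow> (nat \<Rightarrow> real) \<Rightarrow> (nat \<Rightarrow> real) set" where
  "C0 n I E xa = {z. (\<forall>i<n. i \<notin> I \<longrightarrow> z i = 1 \<or> z i = -1) \<and> (\<forall>i. n \<le> i \<longrightarrow> z i = 0) \<and>
      (\<forall>i\<in>I. z i = 0) \<and> (\<forall>i\<in>E. z i = xa i)}"

lemma sum_factor:
  fixes F :: "nat \<Rightarrow> real \<Rightarrow> real" and G :: "(nat \<Rightarrow> real) \<Rightarrow> real"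
  assumes I: "I \<subseteq> {..<n}" and EI: "E \<inter> I = {}" and I': "I' \<subseteq> I"
    and xa: "\<forall>i\<in>I'. xa i = 1 \<or> xa i = -1"
  shows "(\<Sum>x\<in>{x\<in>cube n. \<forall>i\<in>I' \<union> E. x i = xa i}. (\<Prod>i\<in>I. F i (x i)) * G (zer I x)) =
    (\<Prod>i\<in>I. \<Sum>v\<in>(if i \<in> I' then {xa i} else {1,-1}). F i v) * (\<Sum>z\<in>C0 n I E xa. G z)"
proof -
  have fI: "finite I" using I finite_subset by blast
  define P where "P = PiE I (\<lambda>i. if i \<in> I' then {xa i} else {1::real,-1})"
  define mg where "mg = (\<lambda>(p::nat\<Rightarrow>real, z::nat\<Rightarrow>real). (\<lambda>i. if i \<in> I then p i else z i))"
  define C where "C = {x\<in>cube n. \<forall>i\<in>I' \<union> E. x i = xa i}"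
  have img: "C = mg ` (P \<times> C0 n I E xa)"
  proof
    show "C \<subseteq> mg ` (P \<times> C0 n I E xa)"
    proof
      fix x assume x: "x \<in> C"
      have "restrict x I \<in> P" using x I I' unfolding P_def C_def cube_def by (auto simp: PiE_def)
      moreover have "zer I x \<in> C0 n I E xa" using x I EI unfolding C0_def C_def cube_def zer_def by auto
      moreover have "x = mg (restrict x I, zer I x)" unfolding mg_def zer_def by auto
      ultimately show "x \<in> mg ` (P \<times> C0 n I E xa)" by blast
    qed
  next
    show "mg ` (P \<times> C0 n I E xa) \<subseteq> C"
    proof clarify
      fix p z assume p: "p \<in> P" and z: "z \<in> C0 n I E xa"
      have pI: "p i \<in> (if i \<in> I' then {xa i} else {1,-1})" if "i \<in> I" for i
        by (rule PiE_mem[OF p[unfolded P_def] that])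
      show "mg (p, z) \<in> C" unfolding C_def cube_def mg_def prod.case
      proof (intro CollectI conjI allI impI ballI)
        fix i assume "i < n"
        then show "(if i \<in> I then p i else z i) = 1 \<or> (if i \<in> I then p i else z i) = -1"
        proof (cases "i \<in> I")
          case True then show ?thesis using pI[of i] xa by (cases "i \<in> I'") auto
        next
          case False then show ?thesis using z \<open>i < n\<close> unfolding C0_def by auto
        qed
      next
        fix i assume "n \<le> i"
        then show "(if i \<in> I then p i else z i) = 0" using I z unfolding C0_def by auto
      next
        fix i assume "i \<in> I' \<union> E"
        then show "(if i \<in> I then p i else z i) = xa i"
        proof
          assume "i \<in> I'" then show ?thesis using pI[of i] I' by auto
        next
          assume "i \<in> E" then show ?thesis using z EI unfolding C0_def by auto
        qed
      qed
    qed
  qed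
  have inj: "inj_on mg (P \<times> C0 n I E xa)"
  proof (rule inj_onI)
    fix w w' assume a: "w \<in> P \<times> C0 n I E xa" "w' \<in> P \<times> C0 n I E xa" "mg w = mg w'"
    obtain p z where w: "w = (p, z)" by (cases w)
    obtain p' z' where w': "w' = (p', z')" by (cases w')
    have e: "(if i \<in> I then p i else z i) = (if i \<in> I then p' i else z' i)" for i
    proof -
      have "mg (p, z) i = mg (p', z') i" using a(3) w w' by simp
      then show ?thesis unfolding mg_def prod.case .
    qed
    have pP: "p \<in> P" "p' \<in> P" and zC: "z \<in> C0 n I E xa" "z' \<in> C0 n I E xa" using a w w' by auto
    have "p = p'"
    proof
      fix i show "p i = p' i"
      proof (cases "i \<in> I")
        case True then show ?thesis using e[of i] by simp
      next
        case False then show ?thesis using pP unfolding P_def by (simp add: PiE_def extensional_def)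
      qed
    qed
    moreover have "z = z'"
    proof
      fix i show "z i = z' i"
      proof (cases "i \<in> I")
        case True then show ?thesis using zC unfolding C0_def by simp
      next
        case False then show ?thesis using e[of i] by simp
      qed
    qed
    ultimately show "w = w'" using w w' by simp
  qed
  have "(\<Sum>x\<in>C. (\<Prod>i\<in>I. F i (x i)) * G (zer I x)) =
     (\<Sum>w\<in>P \<times> C0 n I E xa. (\<Prod>i\<in>I. F i (mg w i)) * G (zer I (mg w)))"
    unfolding img by (rule sum.reindex[OF inj, unfolded comp_def])
  also have "\<dots> = (\<Sum>w\<in>P \<times> C0 n I E xa. (\<Prod>i\<in>I. F i (fst w i)) * G (snd w))"
  proof (rule sum.cong, simp, clarify)
    fix p z assume "p \<in> P" "z \<in> C0 n I E xa"
    then have "zer I (mg (p, z)) = z" unfolding zer_def mg_def C0_def by auto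
    moreover have "(\<Prod>i\<in>I. F i (mg (p,z) i)) = (\<Prod>i\<in>I. F i (p i))" unfolding mg_def by simp
    ultimately show "(\<Prod>i\<in>I. F i (mg (p, z) i)) * G (zer I (mg (p, z))) = (\<Prod>i\<in>I. F i (fst (p, z) i)) * G (snd (p, z))"
      by simp
  qed
  also have "\<dots> = (\<Sum>p\<in>P. \<Prod>i\<in>I. F i (p i)) * (\<Sum>z\<in>C0 n I E xa. G z)"
    by (simp add: sum_product sum.cartesian_product split_def)
  also have "(\<Sum>p\<in>P. \<Prod>i\<in>I. F i (p i)) = (\<Prod>i\<in>I. \<Sum>v\<in>(if i \<in> I' then {xa i} else {1,-1}). F i v)"
    unfolding P_def by (rule prod_sum_PiE[symmetric]) (auto simp: fI)
  finally show ?thesis unfolding C_def .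
qed

definition NB where
  "NB n m J h g xa B = (\<Sum>x\<in>{x\<in>cube n. \<forall>i\<in>B. x i = xa i}. exp (rbm_f n m J h g x))"

definition Tq where "Tq m J h I i y = exp (cc m J h I i y) + exp (- cc m J h I i y)"
definition qq where "qq m J h I xa i y = exp (xa i * cc m J h I i y) / Tq m J h I i y"
definition beta where "beta n m J h g I E xa y = (\<Sum>z\<in>C0 n I E xa. Wf n m J h g I y z)"

lemma Tq_pos: "Tq m J h I i y > 0" unfolding Tq_def by (simp add: add_pos_pos)

lemma repr:
  assumes I: "I \<subseteq> {..<n}" and EI: "E \<inter> I = {}" and I': "I' \<subseteq> I"
    and xa: "\<forall>i\<in>I'. xa i = 1 \<or> xa i = -1"
  shows "NB n m J h g xa (I' \<union> E) = (\<Sum>y\<in>PiE (Aset m J I) (\<lambda>_. {1,-1}).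
      (beta n m J h g I E xa y * (\<Prod>i\<in>I. Tq m J h I i y)) * (\<Prod>i\<in>I'. qq m J h I xa i y))"
proof -
  let ?Y = "PiE (Aset m J I) (\<lambda>_. {1::real,-1})"
  let ?C = "{x\<in>cube n. \<forall>i\<in>I' \<union> E. x i = xa i}"
  have fI: "finite I" using I finite_subset by blast
  have "NB n m J h g xa (I' \<union> E) = (\<Sum>x\<in>?C. \<Sum>y\<in>?Y. Wf n m J h g I y x)"
    unfolding NB_def by (simp add: exp_f_expand[of _ _ _ _ _ _ I])
  also have "\<dots> = (\<Sum>y\<in>?Y. \<Sum>x\<in>?C. Wf n m J h g I y x)" by (rule sum.swap)
  also have "\<dots> = (\<Sum>y\<in>?Y. \<Sum>x\<in>?C. (\<Prod>i\<in>I. (\<lambda>i v. exp (v * cc m J h I i y)) i (x i)) * Wf n m J h g I y (zer I x))"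
    by (intro sum.cong refl Wf_factor[OF I])
  also have "\<dots> = (\<Sum>y\<in>?Y. (\<Prod>i\<in>I. \<Sum>v\<in>(if i \<in> I' then {xa i} else {1,-1}). exp (v * cc m J h I i y)) * beta n m J h g I E xa y)"
  proof (rule sum.cong[OF refl])
    fix y
    show "(\<Sum>x\<in>?C. (\<Prod>i\<in>I. (\<lambda>i v. exp (v * cc m J h I i y)) i (x i)) * Wf n m J h g I y (zer I x)) =
      (\<Prod>i\<in>I. \<Sum>v\<in>(if i \<in> I' then {xa i} else {1,-1}). exp (v * cc m J h I i y)) * beta n m J h g I E xa y"
      unfolding beta_def
      by (rule sum_factor[OF I EI I' xa, of "\<lambda>i v. exp (v * cc m J h I i y)" "Wf n m J h g I y"])
  qed
  also have "\<dots> = (\<Sum>y\<in>?Y. (beta n m J h g I E xa y * (\<Prod>i\<in>I. Tq m J h I i y)) * (\<Prod>i\<in>I'. qq m J h I xa i y))"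
  proof (rule sum.cong[OF refl])
    fix y
    have pt: "(\<Sum>v\<in>(if i \<in> I' then {xa i} else {1,-1}). exp (v * cc m J h I i y)) =
        Tq m J h I i y * (if i \<in> I' then qq m J h I xa i y else 1)" for i
    proof (cases "i \<in> I'")
      case True then show ?thesis unfolding qq_def using Tq_pos[of m J h I i y] by simp
    next
      case False then show ?thesis unfolding Tq_def by simp
    qed
    have "(\<Prod>i\<in>I. if i \<in> I' then qq m J h I xa i y else 1) = (\<Prod>i\<in>I \<inter> I'. qq m J h I xa i y)"
      by (rule prod.inter_restrict[OF fI, symmetric])
    also have "I \<inter> I' = I'" using I' by auto
    finally have "(\<Prod>i\<in>I. \<Sum>v\<in>(if i \<in> I' then {xa i} else {1,-1}). exp (v * cc m J h I i y)) =
       (\<Prod>i\<in>I. Tq m J h I i y) * (\<Prod>i\<in>I'. qq m J h I xa i y)"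
      unfolding pt prod.distrib by simp
    then show "(\<Prod>i\<in>I. \<Sum>v\<in>(if i \<in> I' then {xa i} else {1,-1}). exp (v * cc m J h I i y)) * beta n m J h g I E xa y =
       (beta n m J h g I E xa y * (\<Prod>i\<in>I. Tq m J h I i y)) * (\<Prod>i\<in>I'. qq m J h I xa i y)"
      by simp
  qed
  finally show ?thesis .
qed

lemma finite_cube: "finite (cube n)"
proof -
  have "cube n \<subseteq> (\<lambda>f. \<lambda>i. if i < n then f i else 0) ` PiE {..<n} (\<lambda>_. {1::real,-1})"
  proof
    fix x assume x: "x \<in> cube n"
    have "restrict x {..<n} \<in> PiE {..<n} (\<lambda>_. {1::real,-1})" using x unfolding cube_def by auto
    moreover have "x = (\<lambda>i. if i < n then restrict x {..<n} i else 0)" using x unfolding cube_def by auto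
    ultimately show "x \<in> (\<lambda>f. \<lambda>i. if i < n then f i else 0) ` PiE {..<n} (\<lambda>_. {1::real,-1})" by blast
  qed
  then show ?thesis by (rule finite_subset) (auto intro: finite_PiE)
qed

lemma NB_pos:
  assumes "B \<subseteq> {..<n}" "\<forall>i\<in>B. xa i = 1 \<or> xa i = -1"
  shows "NB n m J h g xa B > 0"
proof -
  define x0 where "x0 = (\<lambda>i. if i < n then (if i \<in> B then xa i else 1) else (0::real))"
  have "x0 \<in> {x\<in>cube n. \<forall>i\<in>B. x i = xa i}" using assms unfolding x0_def cube_def by auto
  then show ?thesis unfolding NB_def
    by (intro sum_pos) (auto intro: finite_subset[OF _ finite_cube])
qed

lemma nu_formula:
  assumes Z: "NB n m J h g xa {} > 0" and s: "NB n m J h g xa S > 0"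
  shows "rbm_nu n m J h g u I' S xa = \<bar>NB n m J h g xa (I' \<union> insert u S) * NB n m J h g xa S
      - NB n m J h g xa (insert u S) * NB n m J h g xa (I' \<union> S)\<bar> / (NB n m J h g xa S)^2"
proof -
  define a where "a = NB n m J h g xa (I' \<union> insert u S)"
  define b where "b = NB n m J h g xa (insert u S)"
  define c where "c = NB n m J h g xa (I' \<union> S)"
  define ss where "ss = NB n m J h g xa S"
  have P: "rbm_prob n m J h g B xa = NB n m J h g xa B / NB n m J h g xa {}" for B
    unfolding rbm_prob_def NB_def by simp
  have C: "rbm_cond n m J h g B S xa = NB n m J h g xa (B \<union> S) / ss" for B
    unfolding rbm_cond_def P ss_def using Z by simp
  have e1: "insert u I' \<union> S = I' \<union> insert u S" by auto
  have e2: "{u} \<union> S = insert u S" by auto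
  have "rbm_nu n m J h g u I' S xa = \<bar>a / ss - b / ss * (c / ss)\<bar>"
    unfolding rbm_nu_def C e1 e2 a_def b_def c_def ..
  also have "a / ss - b / ss * (c / ss) = (a * ss - b * c) / ss^2"
    using s unfolding ss_def by (simp add: field_simps power2_eq_square)
  also have "\<bar>(a * ss - b * c) / ss^2\<bar> = \<bar>a * ss - b * c\<bar> / ss^2" by (simp add: abs_div)
  finally show ?thesis unfolding a_def b_def c_def ss_def .
qed


theorem lemma3:
  fixes n m :: nat and J :: "nat \<Rightarrow> nat \<Rightarrow> real" and h g :: "nat \<Rightarrow> real"
    and u :: nat and I S :: "nat set" and xa :: "nat \<Rightarrow> real"
  assumes "u < n"
    and "S \<subseteq> {..<n}"
    and "I \<noteq> {}"
    and "I \<subseteq> mrf_nbhd n m J h g u"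
    and "u \<notin> I" and "u \<notin> S" and "I \<inter> S = {}"
    and "\<forall>i\<in>insert u (I \<union> S). xa i = 1 \<or> xa i = -1"
  shows "\<exists>I'. I' \<subseteq> I \<and> card I' \<le> 2 ^ rbm_s n m J h g \<and>
    rbm_nu n m J h g u I' S xa \<ge>
      (1 / 4 ^ (2 ^ rbm_s n m J h g)) * (1 / real (card I)) ^ (2 ^ rbm_s n m J h g * (2 ^ rbm_s n m J h g + 1))
      * rbm_nu n m J h g u I S xa"
proof -
  note un = assms(1) and Sn = assms(2) and Ine = assms(3) and Inb = assms(4)
    and uI = assms(5) and uS = assms(6) and IS = assms(7) and xa = assms(8)
  let ?s = "rbm_s n m J h g"
  let ?A = "Aset m J I"
  let ?Y = "PiE ?A (\<lambda>_. {1::real,-1})"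
  let ?NB = "NB n m J h g xa"
  have In: "I \<subseteq> {..<n}" using Inb unfolding mrf_nbhd_def by auto
  have fI: "finite I" using In finite_subset by blast
  define N where "N = card I"
  have N1: "N \<ge> 1" using fI Ine unfolding N_def by (simp add: Suc_le_eq card_gt_0_iff)
  define K where "K = card ?Y"
  have fY: "finite ?Y" by (intro finite_PiE finite_Aset) auto
  have KA: "K = 2 ^ card ?A" unfolding K_def by (simp add: card_PiE finite_Aset numeral_2_eq_2)
  have As: "card ?A \<le> ?s"
  proof -
    let ?B = "{j. j < m \<and> (\<exists>i\<in>mrf_nbhd n m J h g u. J i j \<noteq> 0)}"
    have "card ?A \<le> card ?B" using Inb unfolding Aset_def by (intro card_mono) auto
    also have "card ?B \<le> ?s" unfolding rbm_s_def using un by (intro Max_ge) auto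
    finally show ?thesis .
  qed
  define K' where "K' = (2::nat) ^ ?s"
  have KK': "K \<le> K'" unfolding KA K'_def using As by (simp add: power_increasing)
  define Q where "Q = (\<lambda>I' y. \<Prod>i\<in>I'. qq m J h I xa i y)"
  define gS where "gS = (\<lambda>y. beta n m J h g I S xa y * (\<Prod>i\<in>I. Tq m J h I i y))"
  define gU where "gU = (\<lambda>y. beta n m J h g I (insert u S) xa y * (\<Prod>i\<in>I. Tq m J h I i y))"
  define d where "d = (\<lambda>y. ?NB S * gU y - ?NB (insert u S) * gS y)"
  define F where "F = (\<lambda>I'. ?NB (I' \<union> insert u S) * ?NB S - ?NB (insert u S) * ?NB (I' \<union> S))"
  have xaI: "\<forall>i\<in>I'. xa i = 1 \<or> xa i = -1" if "I' \<subseteq> I" for I' using that xa by auto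
  have Frep: "F I' = (\<Sum>y\<in>?Y. d y * (\<Prod>i\<in>I'. qq m J h I xa i y))" if I': "I' \<subseteq> I" for I'
  proof -
    have r1: "?NB (I' \<union> S) = (\<Sum>y\<in>?Y. gS y * (\<Prod>i\<in>I'. qq m J h I xa i y))"
      unfolding gS_def by (rule repr[OF In _ I' xaI[OF I']]) (use IS in auto)
    have r2: "?NB (I' \<union> insert u S) = (\<Sum>y\<in>?Y. gU y * (\<Prod>i\<in>I'. qq m J h I xa i y))"
      unfolding gU_def by (rule repr[OF In _ I' xaI[OF I']]) (use IS uI in auto)
    show ?thesis unfolding F_def r1 r2 d_def
      by (simp add: sum_distrib_left sum_subtractf[symmetric] algebra_simps)
  qed
  have qb: "\<forall>i\<in>I. \<forall>y\<in>?Y. \<bar>qq m J h I xa i y\<bar> \<le> 1"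
  proof (intro ballI)
    fix i y assume i: "i \<in> I"
    let ?c = "cc m J h I i y"
    have "xa i = 1 \<or> xa i = -1" using xa i by auto
    then have "exp (xa i * ?c) \<le> Tq m J h I i y" unfolding Tq_def by auto
    then show "\<bar>qq m J h I xa i y\<bar> \<le> 1" unfolding qq_def using Tq_pos[of m J h I i y]
      by (simp add: abs_div)
  qed
  obtain T where T: "T \<subseteq> I" "card T \<le> K"
    "\<bar>\<Sum>y\<in>?Y. d y * (\<Prod>i\<in>I. qq m J h I xa i y)\<bar>
       \<le> (2 * (real N + 1)) ^ K * \<bar>\<Sum>y\<in>?Y. d y * (\<Prod>i\<in>T. qq m J h I xa i y)\<bar>"
    using comb_aux[of K N, THEN spec[of _ ?Y], THEN spec[of _ d], THEN spec[of _ "qq m J h I xa"], THEN spec[of _ I]]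
      fY fI qb unfolding K_def N_def by auto
  have FIT: "\<bar>F I\<bar> \<le> (2 * (real N + 1)) ^ K * \<bar>F T\<bar>" using T Frep[OF order_refl] Frep[OF T(1)] by simp
  have Z: "?NB {} > 0" using NB_pos[of "{}" n xa m J h g] by simp
  have sp: "?NB S > 0" using NB_pos[OF Sn, of xa m J h g] xa by auto
  have nuf: "rbm_nu n m J h g u I' S xa = \<bar>F I'\<bar> / (?NB S)^2" for I'
    unfolding F_def by (rule nu_formula[OF Z sp])
  define c where "c = (1 / 4 ^ K') * (1 / real N) ^ (K' * (K' + 1))"
  have c0: "c \<ge> 0" unfolding c_def by simp
  have cK: "c * (2 * (real N + 1)) ^ K \<le> 1"
  proof -
    have "(2 * (real N + 1)) ^ K \<le> (4 * real N) ^ K"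
      using N1 by (intro power_mono) auto
    also have "\<dots> \<le> (4 * real N) ^ K'" using N1 KK' by (intro power_increasing) auto
    also have "\<dots> = 4 ^ K' * real N ^ K'" by (simp add: power_mult_distrib)
    also have "\<dots> \<le> 4 ^ K' * real N ^ (K' * (K' + 1))"
      using N1 by (intro mult_left_mono power_increasing) auto
    finally have "c * (2 * (real N + 1)) ^ K \<le> c * (4 ^ K' * real N ^ (K' * (K' + 1)))"
      using c0 by (intro mult_left_mono)
    also have "\<dots> = 1" unfolding c_def using N1 by (simp add: power_one_over)
    finally show ?thesis .
  qed
  have "\<bar>F I\<bar> / (?NB S)^2 \<le> ((2 * (real N + 1)) ^ K * \<bar>F T\<bar>) / (?NB S)^2"
    by (rule divide_right_mono[OF FIT]) simp
  also have "\<dots> = (2 * (real N + 1)) ^ K * (\<bar>F T\<bar> / (?NB S)^2)" by simp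
  finally have "rbm_nu n m J h g u I S xa \<le> (2 * (real N + 1)) ^ K * rbm_nu n m J h g u T S xa"
    unfolding nuf .
  then have "c * rbm_nu n m J h g u I S xa \<le> c * ((2 * (real N + 1)) ^ K * rbm_nu n m J h g u T S xa)"
    using c0 by (rule mult_left_mono)
  also have "\<dots> = (c * (2 * (real N + 1)) ^ K) * rbm_nu n m J h g u T S xa" by simp
  also have "\<dots> \<le> 1 * rbm_nu n m J h g u T S xa"
    using cK by (intro mult_right_mono) (auto simp: nuf)
  finally have fin: "c * rbm_nu n m J h g u I S xa \<le> rbm_nu n m J h g u T S xa" by simp
  show ?thesis
    using T(1) T(2) KK' fin unfolding c_def K'_def N_def by (intro exI[of _ T]) auto
qed

end
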